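(* Let $n\ge1$, let $G^\star=([n],E^\star)$ be a directed graph (directed cycles allowed), and let $S_1=\operatorname{argmin}_{(\mathcal P,\pi)\in\mathcal S}|E^{(1)}_{(\mathcal P,\pi)}|$. Then (i) the partially ordered partition associated with $G^\star$ belongs to $S_1$, and (ii) for every $(\mathcal P,\pi)\in S_1$, $E^{(1)}_{(\mathcal P,\pi)}$ equals the set of ordered pairs $(a,b)\in[n]^2$ such that $a$ and $b$ are $p$-adjacent in $G^\star$.
   Context: $[n]=\{1,\dots,n\}$. The observed distribution is Markov and faithful to $G^\star$; for distinct $a,b$ and $Z\subseteq[n]\setminus\{a,b\}$, $a\perp\!\!\!\perp b\mid Z$ means $a$ and $b$ are $d$-separated given $Z$ in $G^\star$, and $a\not\perp\!\!\!\perp b\mid Z$ is its negation. In a directed graph, $a$ is an ancestor of $b$ if $a=b$ or there is a directed path from $a$ to $b$. Distinct vertices $a,b$ are $p$-adjacent in a directed graph $G$ if there is an edge between them (in either direction), or $a$ and $b$ have a common child in $G$ which is an ancestor of $a$ or of $b$. $\mathcal S$ is the set of pairs $(\mathcal P,\pi)$ with $\mathcal P$ a partition of $[n]$ and $\pi$ a partial order on $\mathcal P$; $C_1\le_\pi C_2$ iff $(C_1,C_2)\in\pi$; $C_{i,\mathcal P}$ is the block containing $i$; $C\le_\pi\max\{C_1,\dots,C_t\}$ means $C\le_\pi C_i$ for some $i$. The strongly connected components of a directed graph $G$ are the classes of $i\sim j$ iff $i=j$ or there are directed paths $i\to j$ and $j\to i$; on them $C_1\le_G C_2$ iff $C_1=C_2$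 or there is a directed path from a vertex of $C_1$ to a vertex of $C_2$. The partially ordered partition associated with $G$ is (its set of strongly connected components, $\le_G$). For $(\mathcal P,\pi)\in\mathcal S$, $E^{(1)}_{(\mathcal P,\pi)}=\{(a,b)\in[n]^2: a\ne b,\ a\not\perp\!\!\!\perp b\mid\bigcup\{C\in\mathcal P: C\le_\pi\max\{C_{a,\mathcal P},C_{b,\mathcal P}\}\}\setminus\{a,b\}\}$. *)

theory Defs
  imports Main
begin

definition ancestor :: "(nat \<times> nat) set \<Rightarrow> nat \<Rightarrow> nat \<Rightarrow> bool" where
  "ancestor E a b \<longleftrightarrow> (a, b) \<in> E\<^sup>*"

text \<open>A path is a list of distinct vertices vs together with a list ds of edge
  orientations: ds!i = True means the edge vs!i \<rightarrow> vs!(i+1), False means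
  vs!(i+1) \<rightarrow> vs!i.\<close>

definition is_path :: "(nat \<times> nat) set \<Rightarrow> nat list \<Rightarrow> bool list \<Rightarrow> bool" where
  "is_path E vs ds \<longleftrightarrow> vs \<noteq> [] \<and> distinct vs \<and> length ds + 1 = length vs \<and>
     (\<forall>i < length ds. if ds ! i then (vs ! i, vs ! Suc i) \<in> E else (vs ! Suc i, vs ! i) \<in> E)"

definition collider :: "bool list \<Rightarrow> nat \<Rightarrow> bool" where
  "collider ds i \<longleftrightarrow> ds ! (i - 1) \<and> \<not> ds ! i"

definition d_connecting_path :: "(nat \<times> nat) set \<Rightarrow> nat set \<Rightarrow> nat list \<Rightarrow> bool list \<Rightarrow> bool" where
  "d_connecting_path E Z vs ds \<longleftrightarrow> is_path E vs ds \<and>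
     (\<forall>i. 0 < i \<and> i < length ds \<longrightarrow>
        (if collider ds i then (\<exists>z\<in>Z. ancestor E (vs ! i) z) else vs ! i \<notin> Z))"

definition d_separated :: "(nat \<times> nat) set \<Rightarrow> nat \<Rightarrow> nat \<Rightarrow> nat set \<Rightarrow> bool" where
  "d_separated E a b Z \<longleftrightarrow>
     \<not> (\<exists>vs ds. d_connecting_path E Z vs ds \<and> hd vs = a \<and> last vs = b)"

definition p_adjacent :: "(nat \<times> nat) set \<Rightarrow> nat \<Rightarrow> nat \<Rightarrow> bool" where
  "p_adjacent E a b \<longleftrightarrow> a \<noteq> b \<and>
     ((a, b) \<in> E \<or> (b, a) \<in> E \<or>
      (\<exists>c. (a, c) \<in> E \<and> (b, c) \<in> E \<and> (ancestor E c a \<or> ancestor E c b)))"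

definition is_partition :: "nat set set \<Rightarrow> nat set \<Rightarrow> bool" where
  "is_partition P A \<longleftrightarrow> {} \<notin> P \<and> \<Union>P = A \<and>
     (\<forall>C\<in>P. \<forall>D\<in>P. C \<noteq> D \<longrightarrow> C \<inter> D = {})"

definition popart :: "nat \<Rightarrow> (nat set set \<times> nat set rel) set" where
  "popart n = {(P, \<pi>). is_partition P {1..n} \<and> \<pi> \<subseteq> P \<times> P \<and> partial_order_on P \<pi>}"

definition block :: "nat set set \<Rightarrow> nat \<Rightarrow> nat set" where
  "block P i = (THE C. C \<in> P \<and> i \<in> C)"

definition E1 :: "nat \<Rightarrow> (nat \<times> nat) set \<Rightarrow> nat set set \<times> nat set rel \<Rightarrow> (nat \<times> nat) set" where
  "E1 n E s = (case s of (P, \<pi>) \<Rightarrow>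
     {(a, b). a \<in> {1..n} \<and> b \<in> {1..n} \<and> a \<noteq> b \<and>
        \<not> d_separated E a b
            (\<Union>{C \<in> P. (C, block P a) \<in> \<pi> \<or> (C, block P b) \<in> \<pi>} - {a, b})})"

definition S1 :: "nat \<Rightarrow> (nat \<times> nat) set \<Rightarrow> (nat set set \<times> nat set rel) set" where
  "S1 n E = {s \<in> popart n. \<forall>t \<in> popart n. card (E1 n E s) \<le> card (E1 n E t)}"

definition sccs :: "nat \<Rightarrow> (nat \<times> nat) set \<Rightarrow> nat set set" where
  "sccs n E = (\<lambda>i. {j \<in> {1..n}. (i, j) \<in> E\<^sup>* \<and> (j, i) \<in> E\<^sup>*}) ` {1..n}"

definition scc_order :: "nat \<Rightarrow> (nat \<times> nat) set \<Rightarrow> nat set rel" where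
  "scc_order n E = {(C1, C2). C1 \<in> sccs n E \<and> C2 \<in> sccs n E \<and>
      (C1 = C2 \<or> (\<exists>x\<in>C1. \<exists>y\<in>C2. (x, y) \<in> E\<^sup>*))}"

definition assoc_popart :: "nat \<Rightarrow> (nat \<times> nat) set \<Rightarrow> nat set set \<times> nat set rel" where
  "assoc_popart n E = (sccs n E, scc_order n E)"

end

theory Submission
  imports Defs
begin

lemma dsep_sym:
  assumes "\<not> d_separated E a b Z" shows "\<not> d_separated E b a Z"
proof -
  from assms obtain vs ds where p: "d_connecting_path E Z vs ds" "hd vs = a" "last vs = b"
    unfolding d_separated_def by blast
  define k where "k = length ds"
  have len: "length vs = k + 1" using p(1) unfolding d_connecting_path_def is_path_def k_def by simp
  define vs' where "vs' = rev vs"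
  define ds' where "ds' = rev (map Not ds)"
  have vsn: "vs' ! i = vs ! (k - i)" if "i \<le> k" for i using that len by (simp add: vs'_def rev_nth)
  have dsn: "ds' ! i = (\<not> ds ! (k - 1 - i))" if "i < k" for i using that by (simp add: ds'_def rev_nth k_def)
  have lds': "length ds' = k" by (simp add: ds'_def k_def)
  have ip: "is_path E vs' ds'"
    unfolding is_path_def
  proof (intro conjI allI impI)
    show "vs' \<noteq> []" using len by (cases vs) (auto simp: vs'_def)
    show "distinct vs'" using p(1) by (simp add: vs'_def d_connecting_path_def is_path_def)
    show "length ds' + 1 = length vs'" using len lds' by (simp add: vs'_def)
    fix i assume i: "i < length ds'"
    hence ik: "i < k" by (simp add: lds')
    obtain m where km: "k = Suc (i + m)" using ik less_imp_Suc_add by blast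
    have j: "m < k" using km by simp
    have e: "if ds ! m then (vs ! m, vs ! Suc m) \<in> E else (vs ! Suc m, vs ! m) \<in> E"
      using p(1) j unfolding d_connecting_path_def is_path_def k_def by blast
    have d1: "ds' ! i = (\<not> ds ! m)" using dsn[OF ik] km by simp
    have v1: "vs' ! i = vs ! Suc m" using vsn[of i] km by simp
    have v2: "vs' ! Suc i = vs ! m" using vsn[of "Suc i"] km by simp
    show "if ds' ! i then (vs' ! i, vs' ! Suc i) \<in> E else (vs' ! Suc i, vs' ! i) \<in> E"
      using e by (simp add: d1 v1 v2)
  qed
  have "\<forall>i. 0 < i \<and> i < length ds' \<longrightarrow> (if collider ds' i then (\<exists>z\<in>Z. ancestor E (vs' ! i) z) else vs' ! i \<notin> Z)"
  proof (intro allI impI)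
    fix i assume i: "0 < i \<and> i < length ds'"
    hence ik: "0 < i" "i < k" by (auto simp: lds')
    obtain m where km: "k = Suc (i + m)" using ik less_imp_Suc_add by blast
    obtain i' where ii: "i = Suc i'" using ik gr0_implies_Suc by blast
    have c: "collider ds' i = collider ds (k - i)" unfolding collider_def using ik
      using dsn[of i] dsn[of "i - 1"] km ii by auto
    have "0 < k - i \<and> k - i < length ds" using ik by (simp add: k_def)
    with p(1) have "if collider ds (k-i) then (\<exists>z\<in>Z. ancestor E (vs ! (k-i)) z) else vs ! (k-i) \<notin> Z"
      unfolding d_connecting_path_def by blast
    then show "if collider ds' i then (\<exists>z\<in>Z. ancestor E (vs' ! i) z) else vs' ! i \<notin> Z"
      using c vsn ik by simp
  qed
  moreover have "hd vs' = b" "last vs' = a" using p len by (auto simp: vs'_def hd_rev last_rev)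
  ultimately show ?thesis using ip unfolding d_separated_def d_connecting_path_def by blast
qed

lemma back_path:
  assumes "ws \<noteq> []" "distinct ws" "\<forall>i. Suc i < length ws \<longrightarrow> (ws ! Suc i, ws ! i) \<in> E"
    "\<forall>i. 0 < i \<and> Suc i < length ws \<longrightarrow> ws ! i \<notin> Z"
  shows "\<not> d_separated E (hd ws) (last ws) Z"
proof -
  define ds where "ds = replicate (length ws - 1) False"
  have "is_path E ws ds" unfolding is_path_def ds_def using assms by auto
  moreover have "\<forall>i. 0 < i \<and> i < length ds \<longrightarrow>
        (if collider ds i then (\<exists>z\<in>Z. ancestor E (ws ! i) z) else ws ! i \<notin> Z)"
    using assms(4) by (auto simp: ds_def collider_def)
  ultimately show ?thesis unfolding d_separated_def d_connecting_path_def by blast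
qed

lemma dirpath:
  assumes "(x, y) \<in> E\<^sup>*"
  shows "\<exists>vs. vs \<noteq> [] \<and> distinct vs \<and> hd vs = y \<and> last vs = x \<and>
     (\<forall>i. Suc i < length vs \<longrightarrow> (vs ! Suc i, vs ! i) \<in> E) \<and> (\<forall>v\<in>set vs. (x, v) \<in> E\<^sup>*)"
  using assms
proof (induction rule: rtrancl_induct)
  case base
  then show ?case by (rule exI[of _ "[x]"]) auto
next
  case (step y z)
  then obtain vs where vs: "vs \<noteq> []" "distinct vs" "hd vs = y" "last vs = x"
     "\<forall>i. Suc i < length vs \<longrightarrow> (vs ! Suc i, vs ! i) \<in> E" "\<forall>v\<in>set vs. (x, v) \<in> E\<^sup>*" by blast
  have xz: "(x, z) \<in> E\<^sup>*" using step by auto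
  show ?case
  proof (cases "z \<in> set vs")
    case False
    have "\<forall>i. Suc i < length (z # vs) \<longrightarrow> ((z # vs) ! Suc i, (z # vs) ! i) \<in> E"
    proof (intro allI impI)
      fix i assume "Suc i < length (z # vs)"
      then show "((z # vs) ! Suc i, (z # vs) ! i) \<in> E"
        using vs step(2) by (cases i) (auto simp: hd_conv_nth)
    qed
    then show ?thesis using False vs xz
      by (intro exI[of _ "z # vs"]) auto
  next
    case True
    then obtain j where j: "j < length vs" "vs ! j = z" by (auto simp: in_set_conv_nth)
    have "\<forall>i. Suc i < length (drop j vs) \<longrightarrow> ((drop j vs) ! Suc i, (drop j vs) ! i) \<in> E"
      using vs(5) by auto
    moreover have "hd (drop j vs) = z" using j by (simp add: hd_drop_conv_nth)
    moreover have "last (drop j vs) = x" using j vs by simp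
    moreover have "\<forall>v\<in>set (drop j vs). (x, v) \<in> E\<^sup>*" using vs(6) by (meson in_set_dropD)
    ultimately show ?thesis using j vs
      by (intro exI[of _ "drop j vs"]) auto
  qed
qed

lemma lower1:
  assumes "(a, b) \<in> E" "a \<noteq> b" shows "\<not> d_separated E a b Z"
  using back_path[of "[b, a]" E Z] assms dsep_sym by auto

lemma lower2:
  assumes "(a, c) \<in> E" "(b, c) \<in> E" "a \<noteq> b" "\<forall>i. (i, i) \<notin> E" "\<exists>z\<in>Z. ancestor E c z"
  shows "\<not> d_separated E a b Z"
proof -
  have ne: "a \<noteq> c" "b \<noteq> c" using assms by auto
  have "d_connecting_path E Z [a, c, b] [True, False]"
    unfolding d_connecting_path_def is_path_def collider_def
    using assms ne by (auto simp: less_Suc_eq nth_Cons')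
  then show ?thesis unfolding d_separated_def by force
qed

lemma lower3:
  assumes "(b, c) \<in> E" "ancestor E c a" "\<not> (\<exists>z\<in>Z. ancestor E c z)" "a \<noteq> b" "\<forall>i. (i, i) \<notin> E"
  shows "\<not> d_separated E a b Z"
proof -
  obtain vs where vs: "vs \<noteq> []" "distinct vs" "hd vs = a" "last vs = c"
     "\<forall>i. Suc i < length vs \<longrightarrow> (vs ! Suc i, vs ! i) \<in> E" "\<forall>v\<in>set vs. (c, v) \<in> E\<^sup>*"
    using dirpath[of c a E] assms(2) unfolding ancestor_def by blast
  have nZ: "v \<notin> Z" if "v \<in> set vs" for v
    using that vs(6) assms(3) unfolding ancestor_def by blast
  show ?thesis
  proof (cases "b \<in> set vs")
    case False
    let ?ws = "vs @ [b]"
    have "\<forall>i. Suc i < length ?ws \<longrightarrow> (?ws ! Suc i, ?ws ! i) \<in> E"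
    proof (intro allI impI)
      fix i assume i: "Suc i < length ?ws"
      show "(?ws ! Suc i, ?ws ! i) \<in> E"
      proof (cases "Suc i < length vs")
        case True then show ?thesis using vs(5) by (simp add: nth_append)
      next
        case False
        then have "i = length vs - 1" using i by simp
        then show ?thesis using vs(1,4) assms(1) False
          by (simp add: nth_append last_conv_nth)
      qed
    qed
    moreover have "\<forall>i. 0 < i \<and> Suc i < length ?ws \<longrightarrow> ?ws ! i \<notin> Z"
      using nZ by (auto simp: nth_append)
    ultimately have "\<not> d_separated E (hd ?ws) (last ?ws) Z"
      using back_path[of ?ws E Z] vs False by auto
    then show ?thesis using vs by simp
  next
    case True
    then obtain j where j: "j < length vs" "vs ! j = b" by (auto simp: in_set_conv_nth)
    let ?ws = "take (Suc j) vs"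
    have "\<forall>i. Suc i < length ?ws \<longrightarrow> (?ws ! Suc i, ?ws ! i) \<in> E" using vs(5) by auto
    moreover have "\<forall>i. 0 < i \<and> Suc i < length ?ws \<longrightarrow> ?ws ! i \<notin> Z"
      using nZ nth_mem by auto
    moreover have "?ws \<noteq> []" using vs by simp
    moreover have "distinct ?ws" using vs by simp
    ultimately have "\<not> d_separated E (hd ?ws) (last ?ws) Z"
      using back_path[of ?ws E Z] by blast
    moreover have "hd ?ws = a" using vs by simp
    moreover have "last ?ws = b" using j by (subst last_conv_nth) auto
    ultimately show ?thesis by simp
  qed
qed

lemma lower:
  assumes "p_adjacent E a b" "\<forall>i. (i, i) \<notin> E"
  shows "\<not> d_separated E a b Z"
proof -
  have ab: "a \<noteq> b" using assms by (simp add: p_adjacent_def)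
  consider "(a, b) \<in> E" | "(b, a) \<in> E" | c where "(a, c) \<in> E" "(b, c) \<in> E" "ancestor E c a \<or> ancestor E c b"
    using assms unfolding p_adjacent_def by blast
  then show ?thesis
  proof cases
    case 1 then show ?thesis using lower1 ab by blast
  next
    case 2 then show ?thesis using lower1 ab dsep_sym by metis
  next
    case (3 c)
    show ?thesis
    proof (cases "\<exists>z\<in>Z. ancestor E c z")
      case True then show ?thesis using lower2 3 ab assms(2) by blast
    next
      case False
      show ?thesis
      proof (cases "ancestor E c a")
        case True then show ?thesis using lower3 3 False ab assms(2) by blast
      next
        case F2: False
        then have "ancestor E c b" using 3 by blast
        then have "\<not> d_separated E b a Z" using lower3[of a c E b Z] 3 False ab assms(2) by metis
        then show ?thesis using dsep_sym by blast
      qed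
    qed
  qed
qed


lemma upper:
  assumes dc: "d_connecting_path E Z vs ds" and hv: "hd vs = a" "last vs = b" and ab: "a \<noteq> b"
    and Esub: "E \<subseteq> {1..n} \<times> {1..n}"
    and Zin: "\<forall>x\<in>{1..n}. x \<noteq> a \<and> x \<noteq> b \<and> (ancestor E x a \<or> ancestor E x b) \<longrightarrow> x \<in> Z"
    and Zan: "\<forall>z\<in>Z. ancestor E z a \<or> ancestor E z b"
  shows "p_adjacent E a b"
proof -
  define k where "k = length ds"
  define Anc where "Anc x \<longleftrightarrow> (x, a) \<in> E\<^sup>* \<or> (x, b) \<in> E\<^sup>*" for x
  have len: "length vs = Suc k" and dist: "distinct vs"
    using dc unfolding d_connecting_path_def is_path_def k_def by auto
  have v0: "vs ! 0 = a" using hv len by (cases vs) auto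
  have vk: "vs ! k = b" using hv len by (subst (asm) last_conv_nth) auto
  have ed: "\<And>i. i < k \<Longrightarrow> (if ds ! i then (vs ! i, vs ! Suc i) \<in> E else (vs ! Suc i, vs ! i) \<in> E)"
    using dc unfolding d_connecting_path_def is_path_def k_def by blast
  have cd: "\<And>i. 0 < i \<Longrightarrow> i < k \<Longrightarrow> (if collider ds i then (\<exists>z\<in>Z. ancestor E (vs ! i) z) else vs ! i \<notin> Z)"
    using dc unfolding d_connecting_path_def k_def by blast
  have colA: "Anc (vs ! i)" if h: "0 < i" "i < k" "collider ds i" for i
  proof -
    obtain z where z: "z \<in> Z" "(vs ! i, z) \<in> E\<^sup>*" using cd[OF h(1,2)] h(3) unfolding ancestor_def by auto
    then show ?thesis using Zan unfolding Anc_def ancestor_def by (meson rtrancl_trans)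
  qed
  have LA: "Anc (vs ! i)" if "i < k" "ds ! i" for i
    using that
  proof (induction "k - i" arbitrary: i rule: less_induct)
    case (less i)
    have e: "(vs ! i, vs ! Suc i) \<in> E" using ed[OF less(2)] less(3) by simp
    have "Anc (vs ! Suc i)"
    proof (cases "Suc i = k")
      case True then show ?thesis using vk unfolding Anc_def by simp
    next
      case False
      then have sk: "Suc i < k" using less(2) by simp
      show ?thesis
      proof (cases "collider ds (Suc i)")
        case True then show ?thesis using colA sk by blast
      next
        case False
        then have "ds ! Suc i" using less(3) unfolding collider_def by simp
        then show ?thesis using less(1)[of "Suc i"] sk by simp
      qed
    qed
    then show ?case using e unfolding Anc_def by (meson converse_rtrancl_into_rtrancl)
  qed
  have LB: "Anc (vs ! i)" if "0 < i" "i \<le> k" "\<not> ds ! (i - 1)" for i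
    using that
  proof (induction i rule: less_induct)
    case (less i)
    obtain i' where ii: "i = Suc i'" using less(2) gr0_implies_Suc by blast
    have e: "(vs ! i, vs ! i') \<in> E" using ed[of i'] less(3,4) ii by simp
    have "Anc (vs ! i')"
    proof (cases "i' = 0")
      case True then show ?thesis using v0 unfolding Anc_def by simp
    next
      case False
      show ?thesis
      proof (cases "collider ds i'")
        case True then show ?thesis using colA False less(3) ii by simp
      next
        case F2: False
        then have "\<not> ds ! (i' - 1)" using less(4) ii unfolding collider_def by simp
        then show ?thesis using less(1)[of i'] False less(3) ii by simp
      qed
    qed
    then show ?case using e unfolding Anc_def by (meson converse_rtrancl_into_rtrancl)
  qed
  have inn: "vs ! i \<in> {1..n}" if "i < k" for i
    using ed[OF that] Esub by (auto split: if_splits)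
  have allcol: "collider ds i" if "0 < i" "i < k" for i
  proof (rule ccontr)
    assume nc: "\<not> collider ds i"
    have "\<not> ds ! (i - 1) \<or> ds ! i" using nc unfolding collider_def by simp
    then have "Anc (vs ! i)"
    proof
      assume "\<not> ds ! (i - 1)" then show ?thesis using LB[of i] that by simp
    next
      assume "ds ! i" then show ?thesis using LA[of i] that by simp
    qed
    moreover have "vs ! i \<noteq> a" using nth_eq_iff_index_eq[OF dist, of i 0] v0 that len by simp
    moreover have "vs ! i \<noteq> b" using nth_eq_iff_index_eq[OF dist, of i k] vk that len by simp
    ultimately have "vs ! i \<in> Z" using Zin inn[OF that(2)] unfolding Anc_def ancestor_def by blast
    then show False using cd[OF that] nc by simp
  qed
  have k0: "k \<noteq> 0" using v0 vk ab by (cases k) auto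
  have k3: "\<not> 3 \<le> k"
  proof
    assume "3 \<le> k"
    then have "collider ds 1" "collider ds 2" using allcol by auto
    then show False unfolding collider_def by simp
  qed
  consider "k = 1" | "k = 2" using k0 k3 by linarith
  then show ?thesis
  proof cases
    case 1
    then show ?thesis using ed[of 0] v0 vk ab unfolding p_adjacent_def by (auto split: if_splits)
  next
    case 2
    then have c: "collider ds 1" using allcol by simp
    have "(a, vs ! 1) \<in> E" using ed[of 0] 2 c v0 unfolding collider_def by simp
    moreover have "(b, vs ! 1) \<in> E" using ed[of 1] 2 c vk unfolding collider_def by (simp add: numeral_2_eq_2)
    moreover have "Anc (vs ! 1)" using colA c 2 by simp
    ultimately show ?thesis using ab unfolding p_adjacent_def Anc_def ancestor_def by blast
  qed
qed


definition scc :: "nat \<Rightarrow> (nat \<times> nat) set \<Rightarrow> nat \<Rightarrow> nat set" where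
  "scc n E i = {j \<in> {1..n}. (i, j) \<in> E\<^sup>* \<and> (j, i) \<in> E\<^sup>*}"

lemma sccs_eq: "sccs n E = scc n E ` {1..n}"
  unfolding sccs_def scc_def by simp

lemma scc_mem: "i \<in> {1..n} \<Longrightarrow> i \<in> scc n E i"
  unfolding scc_def by simp

lemma scc_sub: "scc n E i \<subseteq> {1..n}"
  unfolding scc_def by auto

lemma scc_eq: "j \<in> scc n E i \<Longrightarrow> scc n E j = scc n E i"
  unfolding scc_def by (auto intro: rtrancl_trans)

lemma scc_reach: "x \<in> scc n E i \<Longrightarrow> y \<in> scc n E i \<Longrightarrow> (x, y) \<in> E\<^sup>*"
  unfolding scc_def by (auto intro: rtrancl_trans)

lemma sccs_unique: "C \<in> sccs n E \<Longrightarrow> i \<in> C \<Longrightarrow> C = scc n E i"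
  unfolding sccs_eq using scc_eq by blast

lemma block_eq: "i \<in> {1..n} \<Longrightarrow> block (sccs n E) i = scc n E i"
  unfolding block_def
proof (rule the_equality)
  assume "i \<in> {1..n}"
  then show "scc n E i \<in> sccs n E \<and> i \<in> scc n E i" by (simp add: sccs_eq scc_mem)
next
  fix C assume "C \<in> sccs n E \<and> i \<in> C"
  then show "C = scc n E i" using sccs_unique by blast
qed

lemma assoc_in_popart: "assoc_popart n E \<in> popart n"
proof -
  have part: "is_partition (sccs n E) {1..n}"
    unfolding is_partition_def
  proof (intro conjI ballI impI)
    show "{} \<notin> sccs n E" using scc_mem unfolding sccs_eq by blast
    show "\<Union> (sccs n E) = {1..n}" using scc_mem scc_sub unfolding sccs_eq by blast
    fix C D assume "C \<in> sccs n E" "D \<in> sccs n E" "C \<noteq> D"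
    then show "C \<inter> D = {}" using sccs_unique by blast
  qed
  have sub: "scc_order n E \<subseteq> sccs n E \<times> sccs n E" unfolding scc_order_def by auto
  have refl: "refl_on (sccs n E) (scc_order n E)" unfolding refl_on_def scc_order_def by auto
  have trans: "trans (scc_order n E)"
  proof (rule transI)
    fix C1 C2 C3 assume h: "(C1, C2) \<in> scc_order n E" "(C2, C3) \<in> scc_order n E"
    show "(C1, C3) \<in> scc_order n E"
    proof (cases "C1 = C2 \<or> C2 = C3")
      case True then show ?thesis using h by auto
    next
      case False
      then obtain x y x' y' where xy: "x \<in> C1" "y \<in> C2" "(x, y) \<in> E\<^sup>*" "x' \<in> C2" "y' \<in> C3" "(x', y') \<in> E\<^sup>*"
        using h unfolding scc_order_def by blast
      have "C2 \<in> sccs n E" using h unfolding scc_order_def by auto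
      then have "(y, x') \<in> E\<^sup>*" using xy sccs_unique[of C2 n E y] scc_reach by metis
      then have "(x, y') \<in> E\<^sup>*" using xy by (meson rtrancl_trans)
      then show ?thesis using h xy unfolding scc_order_def by blast
    qed
  qed
  have anti: "antisym (scc_order n E)"
  proof (rule antisymI)
    fix C1 C2 assume h: "(C1, C2) \<in> scc_order n E" "(C2, C1) \<in> scc_order n E"
    show "C1 = C2"
    proof (rule ccontr)
      assume ne: "C1 \<noteq> C2"
      then obtain x y x' y' where xy: "x \<in> C1" "y \<in> C2" "(x, y) \<in> E\<^sup>*" "x' \<in> C2" "y' \<in> C1" "(x', y') \<in> E\<^sup>*"
        using h unfolding scc_order_def by blast
      have C1: "C1 \<in> sccs n E" and C2: "C2 \<in> sccs n E" using h unfolding scc_order_def by auto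
      have e1: "C1 = scc n E x" using sccs_unique C1 xy by blast
      have e2: "C2 = scc n E y" using sccs_unique C2 xy by blast
      have "(y, x') \<in> E\<^sup>*" using xy e2 scc_reach by metis
      moreover have "(y', x) \<in> E\<^sup>*" using xy e1 scc_reach by metis
      ultimately have "(y, x) \<in> E\<^sup>*" using xy by (meson rtrancl_trans)
      moreover have "y \<in> {1..n}" using xy e2 scc_sub by blast
      ultimately have "y \<in> scc n E x" using xy unfolding scc_def by simp
      then show False using e1 e2 ne scc_eq by metis
    qed
  qed
  show ?thesis unfolding assoc_popart_def popart_def partial_order_on_def preorder_on_def
    using part sub refl trans anti by simp
qed

lemma E1_fin: "finite (E1 n E s)"
proof -
  have "E1 n E s \<subseteq> {1..n} \<times> {1..n}" unfolding E1_def by (cases s) auto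
  then show ?thesis by (rule finite_subset) simp
qed

lemma PA_sub: assumes "\<forall>i. (i, i) \<notin> E"
  shows "{(a, b). a \<in> {1..n} \<and> b \<in> {1..n} \<and> p_adjacent E a b} \<subseteq> E1 n E s"
  using lower[OF _ assms] unfolding E1_def p_adjacent_def[of E] by (cases s) auto

lemma E1_assoc:
  assumes "E \<subseteq> {1..n} \<times> {1..n}" "\<forall>i. (i, i) \<notin> E"
  shows "E1 n E (assoc_popart n E) = {(a, b). a \<in> {1..n} \<and> b \<in> {1..n} \<and> p_adjacent E a b}"
proof (rule antisym)
  show "{(a, b). a \<in> {1..n} \<and> b \<in> {1..n} \<and> p_adjacent E a b} \<subseteq> E1 n E (assoc_popart n E)"
    using PA_sub[OF assms(2)] .
  show "E1 n E (assoc_popart n E) \<subseteq> {(a, b). a \<in> {1..n} \<and> b \<in> {1..n} \<and> p_adjacent E a b}"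
  proof (clarify)
    fix a b assume "(a, b) \<in> E1 n E (assoc_popart n E)"
    then have ab: "a \<in> {1..n}" "b \<in> {1..n}" "a \<noteq> b"
      and nd: "\<not> d_separated E a b (\<Union>{C \<in> sccs n E. (C, block (sccs n E) a) \<in> scc_order n E \<or> (C, block (sccs n E) b) \<in> scc_order n E} - {a, b})"
      unfolding E1_def assoc_popart_def by simp_all
    define Z where "Z = \<Union>{C \<in> sccs n E. (C, block (sccs n E) a) \<in> scc_order n E \<or> (C, block (sccs n E) b) \<in> scc_order n E} - {a, b}"
    have ba: "block (sccs n E) a = scc n E a" and bb: "block (sccs n E) b = scc n E b"
      using block_eq ab by auto
    have key: "(C, scc n E c) \<in> scc_order n E \<Longrightarrow> x \<in> C \<Longrightarrow> c \<in> {1..n} \<Longrightarrow> (x, c) \<in> E\<^sup>*" for C c x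
    proof -
      assume h: "(C, scc n E c) \<in> scc_order n E" "x \<in> C" "c \<in> {1..n}"
      then have C: "C \<in> sccs n E" unfolding scc_order_def by auto
      then have Cx: "C = scc n E x" using sccs_unique h by blast
      have cc: "c \<in> scc n E c" using h scc_mem by blast
      show "(x, c) \<in> E\<^sup>*"
      proof (cases "C = scc n E c")
        case True then show ?thesis using h cc scc_reach by metis
      next
        case False
        then obtain u y where uy: "u \<in> C" "y \<in> scc n E c" "(u, y) \<in> E\<^sup>*" using h unfolding scc_order_def by blast
        have "(x, u) \<in> E\<^sup>*" using Cx uy h scc_reach by metis
        moreover have "(y, c) \<in> E\<^sup>*" using uy cc scc_reach by metis
        ultimately show ?thesis using uy by (meson rtrancl_trans)
      qed
    qed
    have Zan: "\<forall>z\<in>Z. ancestor E z a \<or> ancestor E z b"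
      unfolding Z_def ba bb ancestor_def using key ab by blast
    have Zin: "\<forall>x\<in>{1..n}. x \<noteq> a \<and> x \<noteq> b \<and> (ancestor E x a \<or> ancestor E x b) \<longrightarrow> x \<in> Z"
    proof (intro ballI impI)
      fix x assume x: "x \<in> {1..n}" and h: "x \<noteq> a \<and> x \<noteq> b \<and> (ancestor E x a \<or> ancestor E x b)"
      have xs: "scc n E x \<in> sccs n E" "x \<in> scc n E x" using x scc_mem sccs_eq by auto
      have "(scc n E x, scc n E a) \<in> scc_order n E \<or> (scc n E x, scc n E b) \<in> scc_order n E"
        using h xs ab scc_mem sccs_eq unfolding scc_order_def ancestor_def by blast
      then show "x \<in> Z" unfolding Z_def ba bb using xs h by blast
    qed
    obtain vs ds where p: "d_connecting_path E Z vs ds" "hd vs = a" "last vs = b"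
      using nd unfolding Z_def[symmetric] d_separated_def by blast
    show "a \<in> {1..n} \<and> b \<in> {1..n} \<and> p_adjacent E a b"
      using upper[OF p ab(3) assms(1) Zin Zan] ab by simp
  qed
qed

theorem proposition3p8:
  fixes n :: nat and E :: "(nat \<times> nat) set"
  assumes "n \<ge> 1"
    and "E \<subseteq> {1..n} \<times> {1..n}"
    and "\<forall>i. (i, i) \<notin> E"
  shows "assoc_popart n E \<in> S1 n E \<and>
         (\<forall>s \<in> S1 n E. E1 n E s =
            {(a, b). a \<in> {1..n} \<and> b \<in> {1..n} \<and> p_adjacent E a b})"
proof -
  let ?PA = "{(a, b). a \<in> {1..n} \<and> b \<in> {1..n} \<and> p_adjacent E a b}"
  have eq: "E1 n E (assoc_popart n E) = ?PA" using E1_assoc assms by blast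
  have le: "card ?PA \<le> card (E1 n E t)" for t
    using PA_sub[OF assms(3)] E1_fin by (rule card_mono[rotated])
  have 1: "assoc_popart n E \<in> S1 n E"
    unfolding S1_def using assoc_in_popart le[unfolded eq[symmetric]] by blast
  have "E1 n E s = ?PA" if "s \<in> S1 n E" for s
  proof -
    have "card (E1 n E s) \<le> card (E1 n E (assoc_popart n E))"
      using that assoc_in_popart unfolding S1_def by blast
    then have "card (E1 n E s) \<le> card ?PA" using eq by simp
    moreover have "?PA \<subseteq> E1 n E s" using PA_sub[OF assms(3)] .
    moreover have "finite (E1 n E s)" by (rule E1_fin)
    ultimately show ?thesis using card_seteq by blast
  qed
  then show ?thesis using 1 by blast
qed

end
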